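(* Let $a,\phi\ge0$ with $\langle a\rangle:=\int_{\mathbb{R}^d}a>0$, $\langle\phi\rangle:=\int_{\mathbb{R}^d}\phi>0$, and $m,\lambda>0$. A constant function $\rho_t(x)\equiv\rho>0$ is a stationary solution of $\partial_t\rho_t=-\rho_t(a*\rho_t)-m\rho_te^{-(\phi*\rho_t)}+\lambda$ if and only if $\lambda=\langle a\rangle\rho^2+m\rho e^{-\langle\phi\rangle\rho}$. Moreover: if $$\frac{\langle a\rangle}{m\langle\phi\rangle}<\frac{3-\sqrt5}{4}\exp\Bigl(-\frac{1+\sqrt5}{2}\Bigr),$$ then there exists $\lambda>0$ for which the equation $\lambda=\langle a\rangle\rho^2+m\rho e^{-\langle\phi\rangle\rho}$ has exactly three positive solutions $\rho$; if the reverse (non-strict) inequality $\frac{\langle a\rangle}{m\langle\phi\rangle}\ge\frac{3-\sqrt5}{4}\exp\bigl(-\frac{1+\sqrt5}{2}\bigr)$ holds, then for every $\lambda>0$ this equation has exactly one positive solution.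
   Context: $*$ denotes convolution on $\mathbb{R}^d$; $a,\phi\in L^1(\mathbb{R}^d)\cap L^\infty(\mathbb{R}^d)$ are nonnegative. *)

theory Defs
  imports "HOL-Analysis.Analysis"
begin

definition conv :: "('d::euclidean_space \<Rightarrow> real) \<Rightarrow> ('d \<Rightarrow> real) \<Rightarrow> 'd \<Rightarrow> real" where
  "conv f g x = (LINT y|lborel. f (x - y) * g y)"

definition mass :: "('d::euclidean_space \<Rightarrow> real) \<Rightarrow> real" where
  "mass f = (LINT x|lborel. f x)"

definition L1_Linf :: "('d::euclidean_space \<Rightarrow> real) \<Rightarrow> bool" where
  "L1_Linf f \<longleftrightarrow> integrable lborel f \<and> (\<exists>B. AE x in lborel. \<bar>f x\<bar> \<le> B)"

definition stationary :: "('d::euclidean_space \<Rightarrow> real) \<Rightarrow> ('d \<Rightarrow> real) \<Rightarrow> real \<Rightarrow> real \<Rightarrow> ('d \<Rightarrow> real) \<Rightarrow> bool" where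
  "stationary a \<phi> m lam \<rho> \<longleftrightarrow>
     (\<forall>x. - \<rho> x * conv a \<rho> x - m * \<rho> x * exp (- conv \<phi> \<rho> x) + lam = 0)"

end

theory Submission
  imports Defs
begin

lemma conv_const:
  fixes a :: "'d::euclidean_space \<Rightarrow> real"
  assumes "integrable lborel a"
  shows "conv a (\<lambda>_. r) x = r * mass a"
proof -
  have D: "distr lborel borel (\<lambda>y. x + (-1::real) *\<^sub>R y) = (lborel :: 'd measure)"
    using lborel_affine[of "-1::real" x] by (simp add: density_1)
  have am: "a \<in> borel_measurable borel" using assms by (simp add: borel_measurable_integrable)
  have "mass a = (LINT y|distr lborel borel (\<lambda>y. x + (-1::real) *\<^sub>R y). a y)"
    unfolding mass_def D ..
  also have "\<dots> = (LINT y|lborel. a (x + (-1::real) *\<^sub>R y))"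
    by (rule integral_distr) (auto simp: am)
  finally have "mass a = (LINT y|lborel. a (x - y))" by simp
  then show ?thesis unfolding conv_def by (simp add: mult.commute)
qed
definition hh :: "real \<Rightarrow> real" where "hh s = (s - 1) * exp (- s) / (2 * s)"
definition phi :: real where "phi = (1 + sqrt 5) / 2"
definition kstar :: real where "kstar = (3 - sqrt 5) / 4 * exp (- (1 + sqrt 5) / 2)"

lemma s5: "sqrt 5 * sqrt 5 = (5::real)" by simp
lemma sqrt5_bounds: "2 < sqrt (5::real)" "sqrt 5 < 3"
proof -
  show "2 < sqrt (5::real)" by (auto intro: real_less_rsqrt)
  have "sqrt 5 < sqrt (9::real)" by (simp only: real_sqrt_less_iff)
  moreover have "sqrt (9::real) = 3" by (simp add: real_sqrt_unique)
  ultimately show "sqrt 5 < (3::real)" by linarith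
qed

lemma phi_pos: "1 < phi" using sqrt5_bounds unfolding phi_def by simp

lemma hh_phi: "hh phi = kstar"
proof -
  have "(phi - 1) / (2 * phi) = (3 - sqrt 5) / 4"
    unfolding phi_def using sqrt5_bounds s5 by (simp add: field_simps)
  then show ?thesis unfolding hh_def kstar_def
    by (metis (no_types, lifting) minus_divide_left phi_def times_divide_eq_left mult.commute)
qed

lemma hh_deriv: "s > 0 \<Longrightarrow> (hh has_real_derivative exp (- s) * (1 + s - s\<^sup>2) / (2 * s\<^sup>2)) (at s)"
  unfolding hh_def
  by (auto intro!: derivative_eq_intros simp: field_simps power2_eq_square)

lemma quad_sign: "0 < s \<Longrightarrow> s < phi \<Longrightarrow> 0 < 1 + s - s\<^sup>2"
  "phi < s \<Longrightarrow> 1 + s - s\<^sup>2 < 0"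
proof -
  have eq: "1 + s - s\<^sup>2 = - ((s - phi) * (s - (1 - sqrt 5)/2))"
    unfolding phi_def using s5 by (simp add: field_simps power2_eq_square)
  show "0 < s \<Longrightarrow> s < phi \<Longrightarrow> 0 < 1 + s - s\<^sup>2"
    unfolding eq using sqrt5_bounds by (intro neg_0_less_iff_less[THEN iffD2] mult_neg_pos) auto
  show "phi < s \<Longrightarrow> 1 + s - s\<^sup>2 < 0"
    unfolding eq using sqrt5_bounds phi_pos by (intro neg_less_0_iff_less[THEN iffD2] mult_pos_pos) auto
qed

lemma hh_cont: "0 < s \<Longrightarrow> isCont hh s"
  using hh_deriv DERIV_isCont by blast

lemma hh_cont_on: "0 < x \<Longrightarrow> continuous_on {x..y} hh"
  by (intro continuous_at_imp_continuous_on ballI hh_cont) auto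

lemma hh_inc: "0 < x \<Longrightarrow> x < y \<Longrightarrow> y \<le> phi \<Longrightarrow> hh x < hh y"
  apply (rule DERIV_pos_imp_increasing_open[where f=hh])
    apply simp
   apply (rule exI, rule conjI, rule hh_deriv)
  using quad_sign(1) by (auto intro!: divide_pos_pos hh_cont_on)

lemma hh_dec: "phi \<le> x \<Longrightarrow> x < y \<Longrightarrow> hh y < hh x"
  apply (rule DERIV_neg_imp_decreasing_open[where f=hh])
    apply simp
   apply (rule exI, rule conjI, rule hh_deriv)
  using quad_sign(2) phi_pos by (auto intro!: divide_neg_pos mult_pos_neg hh_cont_on)

lemma hh_le: "0 < s \<Longrightarrow> s \<noteq> phi \<Longrightarrow> hh s < kstar"
  using hh_inc[of s phi] hh_dec[of phi s] hh_phi by (cases "s < phi") auto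

definition G :: "real \<Rightarrow> real \<Rightarrow> real" where "G k s = k * s\<^sup>2 + s * exp (- s)"

lemma G_deriv: "(G k has_real_derivative 2 * k * s + (1 - s) * exp (- s)) (at s)"
  unfolding G_def
  by (auto intro!: derivative_eq_intros simp: field_simps power2_eq_square)

lemma G_cont_on: "continuous_on A (G k)"
  unfolding G_def by (intro continuous_intros)

lemma G_isCont: "isCont (G k) x"
  unfolding G_def by (intro continuous_intros)

lemma G_deriv_eq: "s > 0 \<Longrightarrow> 2 * k * s + (1 - s) * exp (- s) = 2 * s * (k - hh s)"
  unfolding hh_def by (simp add: field_simps)

lemma G_0: "G k 0 = 0" by (simp add: G_def)

lemma G_pos: "0 < k \<Longrightarrow> 0 < s \<Longrightarrow> 0 < G k s"
  unfolding G_def by (intro add_pos_pos) auto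

lemma G_big: "0 < k \<Longrightarrow> 0 \<le> c \<Longrightarrow> c / k + 1 \<le> t \<Longrightarrow> c < G k t"
proof -
  assume k: "0 < k" and c0: "0 \<le> c" and t: "c / k + 1 \<le> t"
  then have c: "c \<le> k * (t - 1)" by (simp add: field_simps)
  have t1: "1 \<le> t" using t k c0 by (smt (verit) divide_nonneg_pos)
  have "t \<le> t\<^sup>2" using t1 by (simp add: power2_eq_square)
  then have a: "k * t \<le> k * t\<^sup>2" using k by simp
  have b: "0 \<le> t * exp (- t)" using t1 by simp
  have "c < k * t" using c k by (simp add: algebra_simps)
  then show ?thesis unfolding G_def using a b by linarith
qed

lemma G_inc: "0 \<le> x \<Longrightarrow> x < y \<Longrightarrow> (\<And>t. x < t \<Longrightarrow> t < y \<Longrightarrow> hh t < k) \<Longrightarrow> G k x < G k y"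
  apply (rule DERIV_pos_imp_increasing_open[where f="G k"])
    apply simp
   apply (rule exI, rule conjI, rule G_deriv)
  by (auto simp: G_deriv_eq G_cont_on)

lemma G_dec: "0 \<le> x \<Longrightarrow> x < y \<Longrightarrow> (\<And>t. x < t \<Longrightarrow> t < y \<Longrightarrow> k < hh t) \<Longrightarrow> G k y < G k x"
  apply (rule DERIV_neg_imp_decreasing_open[where f="G k"])
    apply simp
   apply (rule exI, rule conjI, rule G_deriv)
  by (auto simp: G_deriv_eq G_cont_on mult_pos_neg)

lemma G_mono_big: "kstar \<le> k \<Longrightarrow> 0 \<le> x \<Longrightarrow> x < y \<Longrightarrow> G k x < G k y"
proof -
  assume k: "kstar \<le> k" and x: "0 \<le> x" and xy: "x < y"
  have A: "G k u < G k v" if u: "0 \<le> u" "u < v" "\<not> (u < phi \<and> phi < v)" for u v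
  proof (rule G_inc[OF u(1,2)])
    fix t assume t: "u < t" "t < v"
    then have "t \<noteq> phi" "0 < t" using u by auto
    then show "hh t < k" using hh_le k by force
  qed
  show ?thesis
  proof (cases "x < phi \<and> phi < y")
    case True
    then have "G k x < G k phi" "G k phi < G k y" using A[of x phi] A[of phi y] x phi_pos by auto
    then show ?thesis by linarith
  next
    case False then show ?thesis using A x xy by blast
  qed
qed

lemma card_one: "0 < k \<Longrightarrow> kstar \<le> k \<Longrightarrow> 0 < c \<Longrightarrow> card {s. 0 < s \<and> G k s = c} = 1"
proof -
  assume k: "0 < k" "kstar \<le> k" and c: "0 < c"
  have a: "G k 0 \<le> c" using G_0 c by simp
  have b: "c \<le> G k (c/k+1)" using G_big[OF k(1), of c "c/k+1"] c by simp
  have le: "0 \<le> c/k+1" using c k by simp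
  obtain r where r: "0 \<le> r" "G k r = c"
    using IVT[of "G k" 0 c "c/k+1", OF a b le] G_isCont by blast
  then have r0: "0 < r" using G_0 c by (cases "r = 0") auto
  have "{s. 0 < s \<and> G k s = c} = {r}"
  proof (rule set_eqI, rule iffI)
    fix s assume "s \<in> {s. 0 < s \<and> G k s = c}"
    then have "0 < s" "G k s = c" by auto
    then have "s = r" using G_mono_big[OF k(2), of s r] G_mono_big[OF k(2), of r s] r
      by (cases s r rule: linorder_cases) auto
    then show "s \<in> {r}" by simp
  qed (use r r0 in auto)
  then show ?thesis by simp
qed

lemma strict_inj:
  fixes f :: "real \<Rightarrow> real"
  assumes "\<And>x y. P x \<Longrightarrow> P y \<Longrightarrow> x < y \<Longrightarrow> f x < f y" "P x" "P y" "f x = f y"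
  shows "x = y"
  using assms by (metis linorder_neqE less_irrefl)

lemma card_three: "0 < k \<Longrightarrow> k < kstar \<Longrightarrow> \<exists>c>0. card {s. 0 < s \<and> G k s = c} = 3"
proof -
  assume k: "0 < k" "k < kstar"
  have h1: "hh 1 = 0" by (simp add: hh_def)
  have ph: "1 \<le> phi" using phi_pos by simp
  have hc: "\<forall>x. 1 \<le> x \<and> x \<le> phi \<longrightarrow> isCont hh x" using hh_cont by auto
  obtain s1 where s1: "1 \<le> s1" "s1 \<le> phi" "hh s1 = k"
    using IVT[of hh 1 k phi, OF _ _ ph hc] h1 hh_phi k by auto
  have s1': "s1 < phi" using s1 hh_phi k by (cases "s1 = phi") auto
  define S where "S = phi + \<bar>ln (2 * k)\<bar>"
  have SP: "phi \<le> S" "0 < S" using phi_pos by (auto simp: S_def)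
  have "- S \<le> ln (2 * k)" unfolding S_def using phi_pos by linarith
  then have "exp (- S) \<le> exp (ln (2 * k))" by simp
  then have e: "exp (- S) \<le> 2 * k" using k by simp
  have "(S - 1) * exp (- S) < S * exp (- S)" by simp
  then have "hh S < exp (- S) / 2" unfolding hh_def using SP by (simp add: field_simps)
  with e have hS: "hh S < k" by simp
  have hc2: "\<forall>x. phi \<le> x \<and> x \<le> S \<longrightarrow> isCont hh x" using hh_cont phi_pos by auto
  obtain s2 where s2: "phi \<le> s2" "s2 \<le> S" "hh s2 = k"
    using IVT2[of hh S k phi, OF _ _ SP(1) hc2] hS hh_phi k by auto
  have s2': "phi < s2" using s2 hh_phi k by (cases "s2 = phi") auto
  have s1pos: "0 < s1" using s1 by simp
  have I1: "G k x < G k y" if xy: "0 \<le> x" "x < y" "y \<le> s1" for x y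
  proof (rule G_inc[OF xy(1,2)])
    fix t assume t: "x < t" "t < y"
    then have "hh t < hh s1" using hh_inc[of t s1] s1 xy by auto
    then show "hh t < k" using s1 by simp
  qed
  have I2: "G k y < G k x" if xy: "s1 \<le> x" "x < y" "y \<le> s2" for x y
  proof (rule G_dec)
    fix t assume t: "x < t" "t < y"
    show "k < hh t"
    proof (cases "t \<le> phi")
      case True then show ?thesis using hh_inc[of s1 t] s1 s1pos t xy by auto
    next
      case False then show ?thesis using hh_dec[of t s2] s2 t xy by auto
    qed
  qed (use xy s1pos in auto)
  have I3: "G k x < G k y" if xy: "s2 \<le> x" "x < y" for x y
  proof (rule G_inc)
    fix t assume t: "x < t" "t < y"
    then have "hh t < hh s2" using hh_dec[of s2 t] s2 xy by auto
    then show "hh t < k" using s2 by simp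
  qed (use xy s2' phi_pos in auto)
  have g12: "G k s2 < G k s1" using I2[of s1 s2] s1' s2' by auto
  define c where "c = (G k s1 + G k s2) / 2"
  have c1: "c < G k s1" "G k s2 < c" using g12 by (auto simp: c_def)
  have "0 < G k s2" using G_pos[OF k(1), of s2] s2' phi_pos by linarith
  then have cpos: "0 < c" using c1 by linarith
  have gc: "\<forall>x. a \<le> x \<and> x \<le> b \<longrightarrow> isCont (G k) x" for a b using G_isCont by blast
  obtain r1 where r1: "0 \<le> r1" "r1 \<le> s1" "G k r1 = c"
    using IVT[of "G k" 0 c s1, OF _ _ _ gc] G_0 c1 cpos s1pos by auto
  obtain r2 where r2: "s1 \<le> r2" "r2 \<le> s2" "G k r2 = c"
    using IVT2[of "G k" s2 c s1, OF _ _ _ gc] c1 s1' s2' by auto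
  define T where "T = s2 + c / k + 1"
  have GT: "c < G k T" using G_big[OF k(1), of c T] s2' phi_pos cpos by (simp add: T_def)
  have s2T: "s2 \<le> T" using cpos k by (simp add: T_def)
  obtain r3 where r3: "s2 \<le> r3" "r3 \<le> T" "G k r3 = c"
    using IVT[of "G k" s2 c T, OF _ _ s2T gc] c1 GT by auto
  have r1': "0 < r1" "r1 < s1" using r1 c1 cpos G_0 by (auto simp: order.order_iff_strict)
  have r2': "s1 < r2" "r2 < s2" using r2 c1 by (auto simp: order.order_iff_strict)
  have r3': "s2 < r3" using r3 c1 by (auto simp: order.order_iff_strict)
  have "{s. 0 < s \<and> G k s = c} = {r1, r2, r3}"
  proof (rule set_eqI, rule iffI)
    fix s assume "s \<in> {s. 0 < s \<and> G k s = c}"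
    then have s: "0 < s" "G k s = c" by auto
    show "s \<in> {r1, r2, r3}"
    proof (cases "s \<le> s1")
      case True
      have "s = r1"
      proof (rule strict_inj[where f="G k" and P="\<lambda>x. 0 \<le> x \<and> x \<le> s1"])
        fix x y assume xy: "0 \<le> x \<and> x \<le> s1" "0 \<le> y \<and> y \<le> s1" "x < y"
        show "G k x < G k y" using I1[of x y] xy by linarith
      qed (use s r1 True in simp_all)
      then show ?thesis by simp
    next
      case n1: False
      show ?thesis
      proof (cases "s \<le> s2")
        case True
        have "s = r2"
        proof (rule strict_inj[where f="\<lambda>x. - G k x" and P="\<lambda>x. s1 \<le> x \<and> x \<le> s2"])
          fix x y assume xy: "s1 \<le> x \<and> x \<le> s2" "s1 \<le> y \<and> y \<le> s2" "x < y"
          show "- G k x < - G k y" using I2[of x y] xy by linarith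
        qed (use s r2 True n1 in simp_all)
        then show ?thesis by simp
      next
        case False
        have "s = r3"
        proof (rule strict_inj[where f="G k" and P="\<lambda>x. s2 \<le> x"])
          fix x y assume xy: "s2 \<le> x" "s2 \<le> y" "x < y"
          show "G k x < G k y" using I3[of x y] xy by linarith
        qed (use s r3 False in simp_all)
        then show ?thesis by simp
      qed
    qed
  next
    fix s assume "s \<in> {r1, r2, r3}"
    then show "s \<in> {s. 0 < s \<and> G k s = c}" using r1 r1' r2 r2' r3 r3' s1pos by auto
  qed
  moreover have "card {r1, r2, r3} = 3" using r1' r2' r3' by simp
  ultimately show ?thesis using cpos by metis
qed

theorem mainTheorem10:
  fixes a \<phi> :: "'d::euclidean_space \<Rightarrow> real" and m :: real
  assumes "\<And>x. a x \<ge> 0" and "\<And>x. \<phi> x \<ge> 0"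
    and "L1_Linf a" and "L1_Linf \<phi>"
    and "mass a > 0" and "mass \<phi> > 0" and "m > 0"
  shows "(\<forall>lam>0. \<forall>\<rho>>0. stationary a \<phi> m lam (\<lambda>x. \<rho>) \<longleftrightarrow>
              lam = mass a * \<rho>\<^sup>2 + m * \<rho> * exp (- mass \<phi> * \<rho>))
    \<and> (mass a / (m * mass \<phi>) < (3 - sqrt 5) / 4 * exp (- (1 + sqrt 5) / 2) \<longrightarrow>
        (\<exists>lam>0. card {\<rho>::real. \<rho> > 0 \<and> lam = mass a * \<rho>\<^sup>2 + m * \<rho> * exp (- mass \<phi> * \<rho>)} = 3))
    \<and> (mass a / (m * mass \<phi>) \<ge> (3 - sqrt 5) / 4 * exp (- (1 + sqrt 5) / 2) \<longrightarrow>
        (\<forall>lam>0. card {\<rho>::real. \<rho> > 0 \<and> lam = mass a * \<rho>\<^sup>2 + m * \<rho> * exp (- mass \<phi> * \<rho>)} = 1))"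
  proof -
  let ?A = "mass a" and ?P = "mass \<phi>"
  note A = assms(5) and P = assms(6) and m = assms(7)
  have ia: "integrable lborel a" and ip: "integrable lborel \<phi>"
    using assms(3,4) by (auto simp: L1_Linf_def)
  have p1: "stationary a \<phi> m lam (\<lambda>x. \<rho>) \<longleftrightarrow>
              lam = ?A * \<rho>\<^sup>2 + m * \<rho> * exp (- ?P * \<rho>)" for lam \<rho>
    unfolding stationary_def conv_const[OF ia] conv_const[OF ip]
    by (auto simp: algebra_simps power2_eq_square)
  define k where "k = ?A / (m * ?P)"
  have kpos: "0 < k" using A P m by (simp add: k_def)
  have tr: "card {\<rho>::real. \<rho> > 0 \<and> lam = ?A * \<rho>\<^sup>2 + m * \<rho> * exp (- ?P * \<rho>)}
      = card {s. 0 < s \<and> G k s = lam * ?P / m}" for lam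
  proof -
    have eq: "(lam = ?A * \<rho>\<^sup>2 + m * \<rho> * exp (- ?P * \<rho>)) \<longleftrightarrow> (G k (?P * \<rho>) = lam * ?P / m)" for \<rho>
    proof -
      have "G k (?P * \<rho>) = (?P / m) * (?A * \<rho>\<^sup>2 + m * \<rho> * exp (- ?P * \<rho>))"
        using m P by (simp add: G_def k_def field_simps power2_eq_square)
      moreover have "lam * ?P / m = (?P / m) * lam" by simp
      moreover have "?P / m \<noteq> 0" using m P by simp
      ultimately show ?thesis by (simp only: mult_cancel_left) auto
    qed
    have img: "{s. 0 < s \<and> G k s = lam * ?P / m} =
       (\<lambda>\<rho>. ?P * \<rho>) ` {\<rho>::real. \<rho> > 0 \<and> lam = ?A * \<rho>\<^sup>2 + m * \<rho> * exp (- ?P * \<rho>)}"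
    proof (rule set_eqI, rule iffI)
      fix s assume s: "s \<in> {s. 0 < s \<and> G k s = lam * ?P / m}"
      have "s = ?P * (s / ?P)" using P by simp
      moreover have "s / ?P \<in> {\<rho>::real. \<rho> > 0 \<and> lam = ?A * \<rho>\<^sup>2 + m * \<rho> * exp (- ?P * \<rho>)}"
        using s P eq[of "s / ?P"] by simp
      ultimately show "s \<in> (\<lambda>\<rho>. ?P * \<rho>) ` {\<rho>::real. \<rho> > 0 \<and> lam = ?A * \<rho>\<^sup>2 + m * \<rho> * exp (- ?P * \<rho>)}"
        by (rule image_eqI)
    next
      fix s assume "s \<in> (\<lambda>\<rho>. ?P * \<rho>) ` {\<rho>::real. \<rho> > 0 \<and> lam = ?A * \<rho>\<^sup>2 + m * \<rho> * exp (- ?P * \<rho>)}"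
      then obtain \<rho> where "s = ?P * \<rho>" "\<rho> > 0" "lam = ?A * \<rho>\<^sup>2 + m * \<rho> * exp (- ?P * \<rho>)" by auto
      then show "s \<in> {s. 0 < s \<and> G k s = lam * ?P / m}" using P eq[of \<rho>] by simp
    qed
    have "inj_on (\<lambda>\<rho>. ?P * \<rho>) X" for X using P by (auto simp: inj_on_def)
    then show ?thesis unfolding img by (rule card_image[symmetric])
  qed
  have p2: "\<exists>lam>0. card {\<rho>::real. \<rho> > 0 \<and> lam = ?A * \<rho>\<^sup>2 + m * \<rho> * exp (- ?P * \<rho>)} = 3"
    if h: "?A / (m * ?P) < (3 - sqrt 5) / 4 * exp (- (1 + sqrt 5) / 2)"
  proof -
    have "k < kstar" using h by (simp add: k_def kstar_def)
    then obtain c where c: "0 < c" "card {s. 0 < s \<and> G k s = c} = 3" using card_three kpos by blast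
    define lam where "lam = c * m / ?P"
    have lc: "lam * ?P / m = c" using m P by (simp add: lam_def)
    have l0: "0 < lam" using c m P by (simp add: lam_def)
    have "card {\<rho>::real. \<rho> > 0 \<and> lam = ?A * \<rho>\<^sup>2 + m * \<rho> * exp (- ?P * \<rho>)} = 3"
      unfolding tr[of lam] lc by (rule c(2))
    then show ?thesis using l0 by blast
  qed
  have p3: "\<forall>lam>0. card {\<rho>::real. \<rho> > 0 \<and> lam = ?A * \<rho>\<^sup>2 + m * \<rho> * exp (- ?P * \<rho>)} = 1"
    if h: "?A / (m * ?P) \<ge> (3 - sqrt 5) / 4 * exp (- (1 + sqrt 5) / 2)"
  proof (intro allI impI)
    fix lam :: real assume l: "0 < lam"
    have ks: "kstar \<le> k" using h by (simp add: k_def kstar_def)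
    have "0 < lam * ?P / m" using l m P by simp
    then have "card {s. 0 < s \<and> G k s = lam * ?P / m} = 1" by (rule card_one[OF kpos ks])
    then show "card {\<rho>::real. \<rho> > 0 \<and> lam = ?A * \<rho>\<^sup>2 + m * \<rho> * exp (- ?P * \<rho>)} = 1"
      unfolding tr[of lam] .
  qed
  show ?thesis
  proof (intro conjI)
    show "\<forall>lam>0. \<forall>\<rho>>0. stationary a \<phi> m lam (\<lambda>x. \<rho>) \<longleftrightarrow>
              lam = ?A * \<rho>\<^sup>2 + m * \<rho> * exp (- ?P * \<rho>)" using p1 by simp
  qed (rule impI, erule p2, rule impI, erule p3)
qed

end
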